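(* Consider qubit decoherence under dynamical decoupling in multi-state telegraph-like noises, defined as follows. A noise is specified by real values $w_1,\dots,w_M$, a transition-rate matrix $\Gamma$ with $\sum_j\Gamma_{jk}=0$ for all $k$, and a stationary probability vector $y(0)$ with $\Gamma y(0)=0$; let $W=\mathrm{diag}(w_1,\dots,w_M)$. A DD sequence of $N\ge1$ ideal $\pi$ pulses is given by $0<\alpha_1<\dots<\alpha_N<1$, with $\alpha_0=0$, $\alpha_{N+1}=1$, $a_n=\alpha_n-\alpha_{n-1}$, satisfying the echo condition $\sum_{n=1}^{N+1}(-1)^{n+1}a_n=0$, and the decoherence function is $$\langle x(t)\rangle=\sum_{j}\Big[e^{[\Gamma+(-1)^N iW]a_{N+1}t}\cdots e^{[\Gamma-iW]a_2 t}\,e^{[\Gamma+iW]a_1 t}\,y(0)\Big]_j .$$ Then no DD sequence (for any number $N$ of pulses) suppresses the decoherence beyond the third order of the short-time expansion: for every such sequence, $1-\langle x(t)\rangle$ is not $O(t^4)$ as $t\to0$ for all multi-state telegraph-like noises, i.e. the decoherence is at least of order $t^3$.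
   Context: Physical setting: a qubit with Hamiltonian $H=S_z w(t)$ where $w(t)$ is a classical random field jumping randomly among the values $w_j$ with probabilities evolving by $\frac{d}{dt}Y_j=\sum_{j'}\Gamma_{jj'}Y_{j'}$; $x=S_x+iS_y$ and $\langle x(t)\rangle$ is its ensemble average, equal to $1$ in the absence of decoherence. Ideal $\pi$ pulses flip the sign of the effective field, producing the stated formula. *)

theory Defs
  imports Complex_Main "HOL-Library.Landau_Symbols"
begin

text \<open>Square M x M matrices are represented as functions nat => nat => 'a,
  only the entries with indices below M being relevant.\<close>

definition mmult :: "nat \<Rightarrow> (nat \<Rightarrow> nat \<Rightarrow> complex) \<Rightarrow> (nat \<Rightarrow> nat \<Rightarrow> complex) \<Rightarrow> nat \<Rightarrow> nat \<Rightarrow> complex" where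
  "mmult M A B = (\<lambda>i j. \<Sum>k<M. A i k * B k j)"

fun mpow :: "nat \<Rightarrow> (nat \<Rightarrow> nat \<Rightarrow> complex) \<Rightarrow> nat \<Rightarrow> nat \<Rightarrow> nat \<Rightarrow> complex" where
  "mpow M A 0 = (\<lambda>i j. if i = j then 1 else 0)"
| "mpow M A (Suc k) = mmult M A (mpow M A k)"

definition mexp :: "nat \<Rightarrow> (nat \<Rightarrow> nat \<Rightarrow> complex) \<Rightarrow> nat \<Rightarrow> nat \<Rightarrow> complex" where
  "mexp M A = (\<lambda>i j. \<Sum>k. mpow M A k i j / of_nat (fact k))"

definition mvec :: "nat \<Rightarrow> (nat \<Rightarrow> nat \<Rightarrow> complex) \<Rightarrow> (nat \<Rightarrow> complex) \<Rightarrow> nat \<Rightarrow> complex" where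
  "mvec M A v = (\<lambda>i. \<Sum>j<M. A i j * v j)"

definition telegraph_noise :: "nat \<Rightarrow> (nat \<Rightarrow> nat \<Rightarrow> real) \<Rightarrow> (nat \<Rightarrow> real) \<Rightarrow> (nat \<Rightarrow> real) \<Rightarrow> bool" where
  "telegraph_noise M \<Gamma> w y0 \<longleftrightarrow>
     M \<ge> 1 \<and>
     (\<forall>k<M. (\<Sum>j<M. \<Gamma> j k) = 0) \<and>
     (\<forall>j<M. \<forall>k<M. j \<noteq> k \<longrightarrow> \<Gamma> j k \<ge> 0) \<and>
     (\<forall>j<M. y0 j \<ge> 0) \<and> (\<Sum>j<M. y0 j) = 1 \<and>
     (\<forall>j<M. (\<Sum>k<M. \<Gamma> j k * y0 k) = 0)"

definition seg_gen :: "(nat \<Rightarrow> nat \<Rightarrow> real) \<Rightarrow> (nat \<Rightarrow> real) \<Rightarrow> nat \<Rightarrow> nat \<Rightarrow> nat \<Rightarrow> complex" where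
  "seg_gen \<Gamma> w n = (\<lambda>i j. complex_of_real (\<Gamma> i j)
      + (if i = j then (-1) ^ (n + 1) * \<i> * complex_of_real (w i) else 0))"

fun dd_state :: "nat \<Rightarrow> (nat \<Rightarrow> nat \<Rightarrow> real) \<Rightarrow> (nat \<Rightarrow> real) \<Rightarrow> (nat \<Rightarrow> real) \<Rightarrow> (nat \<Rightarrow> real) \<Rightarrow> real \<Rightarrow> nat \<Rightarrow> nat \<Rightarrow> complex" where
  "dd_state M \<Gamma> w y0 \<alpha> t 0 = (\<lambda>j. complex_of_real (y0 j))"
| "dd_state M \<Gamma> w y0 \<alpha> t (Suc n) =
     mvec M (mexp M (\<lambda>i j. complex_of_real ((\<alpha> (Suc n) - \<alpha> n) * t) * seg_gen \<Gamma> w (Suc n) i j))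
       (dd_state M \<Gamma> w y0 \<alpha> t n)"

definition coherence :: "nat \<Rightarrow> (nat \<Rightarrow> nat \<Rightarrow> real) \<Rightarrow> (nat \<Rightarrow> real) \<Rightarrow> (nat \<Rightarrow> real) \<Rightarrow> nat \<Rightarrow> (nat \<Rightarrow> real) \<Rightarrow> real \<Rightarrow> complex" where
  "coherence M \<Gamma> w y0 N \<alpha> t = (\<Sum>j<M. dd_state M \<Gamma> w y0 \<alpha> t (N + 1) j)"

end

theory Submission
  imports Defs "HOL-Real_Asymp.Real_Asymp"
begin


definition bnd :: "nat \<Rightarrow> (real \<Rightarrow> real) \<Rightarrow> bool" where
  "bnd k f \<longleftrightarrow> (\<exists>C. eventually (\<lambda>t. \<bar>f t\<bar> \<le> C * t ^ k) (at_right 0))"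

lemma ev_pos: "eventually (\<lambda>t::real. 0 < t \<and> t \<le> 1) (at_right 0)"
proof -
  have "eventually (\<lambda>t::real. t \<in> {0<..<1}) (at_right 0)" by (rule eventually_at_right_real) simp
  then show ?thesis by (rule eventually_mono) auto
qed

lemma bnd_add: "bnd k f \<Longrightarrow> bnd k g \<Longrightarrow> bnd k (\<lambda>t. f t + g t)"
  unfolding bnd_def
proof (elim exE)
  fix C D assume a: "eventually (\<lambda>t. \<bar>f t\<bar> \<le> C * t ^ k) (at_right 0)"
    and b: "eventually (\<lambda>t. \<bar>g t\<bar> \<le> D * t ^ k) (at_right 0)"
  have "eventually (\<lambda>t. \<bar>f t + g t\<bar> \<le> (C + D) * t ^ k) (at_right 0)"
    using a b by eventually_elim (auto simp: distrib_right intro: order_trans[OF abs_triangle_ineq])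
  then show "\<exists>C. eventually (\<lambda>t. \<bar>f t + g t\<bar> \<le> C * t ^ k) (at_right 0)" by blast
qed

lemma bnd_cmul: "bnd k f \<Longrightarrow> bnd k (\<lambda>t. c * f t)"
  unfolding bnd_def
proof (elim exE)
  fix C assume a: "eventually (\<lambda>t. \<bar>f t\<bar> \<le> C * t ^ k) (at_right 0)"
  have "eventually (\<lambda>t. \<bar>c * f t\<bar> \<le> (\<bar>c\<bar> * C) * t ^ k) (at_right 0)"
    using a by eventually_elim (auto simp: abs_mult mult.assoc intro: mult_left_mono)
  then show "\<exists>C. eventually (\<lambda>t. \<bar>c * f t\<bar> \<le> C * t ^ k) (at_right 0)" by blast
qed

lemma bnd_neg: "bnd k f \<Longrightarrow> bnd k (\<lambda>t. - f t)"
  using bnd_cmul[of k f "-1"] by simp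

lemma bnd_diff: "bnd k f \<Longrightarrow> bnd k g \<Longrightarrow> bnd k (\<lambda>t. f t - g t)"
  using bnd_add[of k f "\<lambda>t. - g t"] bnd_neg[of k g] by simp

lemma bnd_tmul: "bnd k f \<Longrightarrow> bnd (Suc k) (\<lambda>t. t * f t)"
  unfolding bnd_def
proof (elim exE)
  fix C assume a: "eventually (\<lambda>t. \<bar>f t\<bar> \<le> C * t ^ k) (at_right 0)"
  have "eventually (\<lambda>t. \<bar>t * f t\<bar> \<le> C * t ^ Suc k) (at_right 0)"
    using a ev_pos
  proof eventually_elim
    case (elim t)
    then have "\<bar>t * f t\<bar> = t * \<bar>f t\<bar>" by (simp add: abs_mult)
    also have "\<dots> \<le> t * (C * t ^ k)" using elim by (intro mult_left_mono) auto
    finally show ?case by (simp add: algebra_simps)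
  qed
  then show "\<exists>C. eventually (\<lambda>t. \<bar>t * f t\<bar> \<le> C * t ^ Suc k) (at_right 0)" by blast
qed

lemma bnd_mono1: "bnd (Suc k) f \<Longrightarrow> bnd k f"
  unfolding bnd_def
proof (elim exE)
  fix C assume a: "eventually (\<lambda>t. \<bar>f t\<bar> \<le> C * t ^ Suc k) (at_right 0)"
  have "eventually (\<lambda>t. \<bar>f t\<bar> \<le> \<bar>C\<bar> * t ^ k) (at_right 0)"
    using a ev_pos
  proof eventually_elim
    case (elim t)
    have "C * t ^ Suc k \<le> \<bar>C\<bar> * t ^ Suc k" using elim by (intro mult_right_mono) auto
    also have "\<dots> \<le> \<bar>C\<bar> * t ^ k" using elim by (intro mult_left_mono power_decreasing) auto
    finally show ?case using elim by linarith
  qed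
  then show "\<exists>C. eventually (\<lambda>t. \<bar>f t\<bar> \<le> C * t ^ k) (at_right 0)" by blast
qed

lemma bnd_mono: "k \<le> m \<Longrightarrow> bnd m f \<Longrightarrow> bnd k f"
  by (induction m) (auto simp: le_Suc_eq dest: bnd_mono1)

lemma bnd_pow: "k \<le> m \<Longrightarrow> bnd k (\<lambda>t. c * t ^ m)"
proof -
  assume "k \<le> m"
  have "bnd m (\<lambda>t. t ^ m)" unfolding bnd_def
    by (rule exI[of _ 1], rule eventually_mono[OF ev_pos]) auto
  then have "bnd k (\<lambda>t. t ^ m)" using \<open>k \<le> m\<close> bnd_mono by blast
  then show ?thesis by (rule bnd_cmul)
qed

lemma bnd_mult0: "bnd k f \<Longrightarrow> bnd 0 g \<Longrightarrow> bnd k (\<lambda>t. f t * g t)"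
  unfolding bnd_def
proof (elim exE)
  fix C D assume a: "eventually (\<lambda>t. \<bar>f t\<bar> \<le> C * t ^ k) (at_right 0)"
    and b: "eventually (\<lambda>t. \<bar>g t\<bar> \<le> D * t ^ 0) (at_right 0)"
  have "eventually (\<lambda>t. \<bar>f t * g t\<bar> \<le> (C * D) * t ^ k) (at_right 0)"
    using a b
  proof eventually_elim
    case (elim t)
    have "\<bar>f t * g t\<bar> = \<bar>f t\<bar> * \<bar>g t\<bar>" by (simp add: abs_mult)
    also have "\<dots> \<le> (C * t ^ k) * D" using elim by (intro mult_mono) auto
    finally show ?case by (simp add: algebra_simps)
  qed
  then show "\<exists>C. eventually (\<lambda>t. \<bar>f t * g t\<bar> \<le> C * t ^ k) (at_right 0)" by blast
qed

lemma bigo_bnd: "f \<in> O[at_right 0](\<lambda>t. t ^ k) \<Longrightarrow> bnd k f"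
  unfolding bnd_def
proof -
  assume "f \<in> O[at_right 0](\<lambda>t. t ^ k)"
  then obtain c where "eventually (\<lambda>t. norm (f t) \<le> c * norm (t ^ k)) (at_right (0::real))"
    by (elim landau_o.bigE) auto
  then have "eventually (\<lambda>t. \<bar>f t\<bar> \<le> c * t ^ k) (at_right (0::real))"
    using ev_pos by eventually_elim auto
  then show "\<exists>C. eventually (\<lambda>t. \<bar>f t\<bar> \<le> C * t ^ k) (at_right 0)" by blast
qed

lemma bnd_not3: "bnd 4 (\<lambda>t. c * t ^ 3) \<Longrightarrow> c = 0"
proof (rule ccontr)
  assume "bnd 4 (\<lambda>t. c * t ^ 3)" "c \<noteq> 0"
  then obtain C where "eventually (\<lambda>t. \<bar>c * t ^ 3\<bar> \<le> C * t ^ 4) (at_right 0)"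
    unfolding bnd_def by blast
  then have "eventually (\<lambda>t. \<bar>c\<bar> \<le> C * t) (at_right (0::real))"
    using ev_pos
  proof eventually_elim
    case (elim t)
    have e: "C * t ^ 4 = (C*t) * t^3" by (simp add: eval_nat_numeral)
    have "\<bar>c\<bar> * t^3 = \<bar>c * t^3\<bar>" using elim by (simp add: abs_mult)
    then have "\<bar>c\<bar> * t ^ 3 \<le> (C * t) * t ^ 3" using elim e by linarith
    then show ?case using elim by (meson mult_right_le_imp_le zero_less_power)
  qed
  moreover have "eventually (\<lambda>t. C * t < \<bar>c\<bar>) (at_right (0::real))"
  proof -
    have "((\<lambda>t. C * t) \<longlongrightarrow> C * 0) (at_right (0::real))"
      by (intro tendsto_intros)
    then show ?thesis using \<open>c \<noteq> 0\<close> by (intro order_tendstoD) auto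
  qed
  ultimately have "eventually (\<lambda>t::real. False) (at_right 0)"
    by eventually_elim auto
  then show False by simp
qed

lemma exp_bnd: "bnd 4 (\<lambda>t. exp(-t) - (1 - t + t^2/2 - t^3/6))"
  by (rule bigo_bnd) real_asymp

lemma exp_bnd0: "bnd 0 (\<lambda>t. exp(-t))"
  unfolding bnd_def
  by (rule exI[of _ 1], rule eventually_mono[OF ev_pos]) auto



definition Gm :: "nat \<Rightarrow> nat \<Rightarrow> real" where
  "Gm i j = (if i < 2 \<and> j < 2 then (if i = j then -1 else 1) else 0)"
definition wv :: "nat \<Rightarrow> real" where
  "wv i = (if i = 0 then 1 else if i = 1 then -1 else 0)"
definition yv :: "nat \<Rightarrow> real" where
  "yv i = (if i < 2 then 1/2 else 0)"

lemma sum2: "(\<Sum>j<(2::nat). f j) = f 0 + f 1"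
  by (simp add: eval_nat_numeral)

lemma less2: "(i::nat) < 2 \<longleftrightarrow> i = 0 \<or> i = 1" by auto

lemma noise: "telegraph_noise 2 Gm wv yv"
  unfolding telegraph_noise_def Gm_def wv_def yv_def
  by (auto simp: sum2 less2)

definition Bm :: "complex \<Rightarrow> nat \<Rightarrow> nat \<Rightarrow> complex" where
  "Bm s i j = (if i < 2 \<and> j < 2 then (if i = j then (if i = 0 then s * \<i> else - s * \<i>) else 1) else 0)"

lemma seg_eq: "i < 2 \<Longrightarrow> j < 2 \<Longrightarrow>
   seg_gen Gm wv n i j = Bm ((-1) ^ (n + 1)) i j - (if i = j then 1 else 0)"
  unfolding seg_gen_def Gm_def wv_def Bm_def by (auto simp: less2)

lemma B2: "s * s = 1 \<Longrightarrow> i < 2 \<Longrightarrow> j < 2 \<Longrightarrow> (\<Sum>l<2. Bm s i l * Bm s l j) = 0"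
  unfolding Bm_def sum2 by (auto simp: less2 algebra_simps)

lemma step_eq:
  assumes ss: "s * s = 1" and "i < 2" "j < 2"
  shows "(\<Sum>l<2. (Bm s i l - (if i = l then 1 else 0)) * ((if l = j then 1 else 0) - of_nat k * Bm s l j))
       = of_nat (Suc k) * Bm s i j - (if i = j then 1 else 0)"
proof -
  have ss': "s * (s * x) = x" for x using ss by (metis mult.assoc mult_1)
  show ?thesis using assms unfolding sum2 Bm_def by (auto simp: less2 algebra_simps ss ss')
qed

lemma mpow_eq:
  assumes ss: "s * s = 1" and A: "\<forall>i<2. \<forall>j<2. A i j = c * (Bm s i j - (if i = j then 1 else 0))"
  shows "i < 2 \<Longrightarrow> j < 2 \<Longrightarrow> mpow 2 A k i j = (-c) ^ k * ((if i = j then 1 else 0) - of_nat k * Bm s i j)"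
proof (induction k arbitrary: i j)
  case 0
  then show ?case by simp
next
  case (Suc k)
  have "mpow 2 A (Suc k) i j = (\<Sum>l<2. A i l * mpow 2 A k l j)"
    by (simp add: mmult_def)
  also have "\<dots> = (\<Sum>l<2. (c * (-c) ^ k) * ((Bm s i l - (if i = l then 1 else 0)) * ((if l = j then 1 else 0) - of_nat k * Bm s l j)))"
    using Suc A by (intro sum.cong) auto
  also have "\<dots> = (c * (-c) ^ k) * (of_nat (Suc k) * Bm s i j - (if i = j then 1 else 0))"
    by (simp only: sum_distrib_left[symmetric] step_eq[OF ss Suc.prems])
  also have "\<dots> = (-c) ^ Suc k * ((if i = j then 1 else 0) - of_nat (Suc k) * Bm s i j)"
    by (simp add: algebra_simps)
  finally show ?case .
qed

lemma exp_sums: "(\<lambda>k. x ^ k / of_nat (fact k)) sums exp (x::complex)"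
proof -
  have "(\<lambda>n. x ^ n /\<^sub>R fact n) sums exp x" by (rule exp_converges)
  moreover have "(\<lambda>n. x ^ n /\<^sub>R fact n) = (\<lambda>k. x ^ k / of_nat (fact k))"
    by (auto simp: scaleR_conv_of_real divide_inverse)
  ultimately show ?thesis by simp
qed

lemma exp_sums2: "(\<lambda>k. of_nat k * x ^ k / of_nat (fact k)) sums (x * exp (x::complex))"
proof -
  have "(\<lambda>m. x * (x ^ m / of_nat (fact m))) sums (x * exp x)"
    by (rule sums_mult[OF exp_sums])
  moreover have "(\<lambda>m. x * (x ^ m / of_nat (fact m))) = (\<lambda>m. of_nat (Suc m) * x ^ (Suc m) / of_nat (fact (Suc m)))"
  proof
    fix m
    have "of_nat (fact (Suc m)) = (of_nat (Suc m) :: complex) * of_nat (fact m)"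
      by (simp add: fact_Suc algebra_simps)
    then show "x * (x ^ m / of_nat (fact m)) = of_nat (Suc m) * x ^ (Suc m) / of_nat (fact (Suc m))"
      by (simp del: of_nat_Suc fact_Suc)
  qed
  ultimately have "(\<lambda>m. of_nat (Suc m) * x ^ (Suc m) / of_nat (fact (Suc m))) sums (x * exp x)" by simp
  from sums_Suc[OF this] show ?thesis by simp
qed

lemma mexp_eq:
  assumes ss: "s * s = 1" and A: "\<forall>i<2. \<forall>j<2. A i j = c * (Bm s i j - (if i = j then 1 else 0))"
    and ij: "i < 2" "j < 2"
  shows "mexp 2 A i j = exp (-c) * ((if i = j then 1 else 0) + c * Bm s i j)"
proof -
  let ?d = "(if i = j then 1 else 0) :: complex"
  have "(\<lambda>k. ?d * ((-c) ^ k / of_nat (fact k)) - Bm s i j * (of_nat k * (-c) ^ k / of_nat (fact k)))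
     sums (?d * exp (-c) - Bm s i j * (-c * exp (-c)))"
    by (intro sums_diff sums_mult exp_sums exp_sums2)
  moreover have "(\<lambda>k. ?d * ((-c) ^ k / of_nat (fact k)) - Bm s i j * (of_nat k * (-c) ^ k / of_nat (fact k)))
      = (\<lambda>k. mpow 2 A k i j / of_nat (fact k))"
    by (rule ext) (simp add: mpow_eq[OF ss A ij] diff_divide_distrib algebra_simps)
  ultimately have "(\<lambda>k. mpow 2 A k i j / of_nat (fact k)) sums (?d * exp (-c) - Bm s i j * (-c * exp (-c)))"
    by simp
  then have "mexp 2 A i j = ?d * exp (-c) - Bm s i j * (-c * exp (-c))"
    unfolding mexp_def by (simp add: sums_iff)
  then show ?thesis by (simp add: algebra_simps)
qed



fun UY :: "(nat \<Rightarrow> real) \<Rightarrow> real \<Rightarrow> nat \<Rightarrow> real \<times> real" where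
  "UY \<alpha> t 0 = (1, 0)"
| "UY \<alpha> t (Suc n) = (let p = UY \<alpha> t n; c = (\<alpha> (Suc n) - \<alpha> n) * t; s = (-1::real) ^ (Suc n + 1)
     in (fst p + c * (fst p - s * snd p), snd p + c * (s * fst p - snd p)))"

lemma sign_cases: "(-1::real) ^ m = 1 \<or> (-1::real) ^ m = -1"
  by (cases "even m") auto

lemma alg:
  fixes e E U Y c s :: real
  assumes s: "s = 1 \<or> s = -1" and j: "j < 2"
  shows "(\<Sum>l<2. (complex_of_real e * ((if j = l then 1 else 0) + complex_of_real c * Bm (complex_of_real s) j l))
           * (complex_of_real E / 2 * (complex_of_real U + (if l = 0 then 1 else -1) * \<i> * complex_of_real Y)))
   = complex_of_real (e * E) / 2 * (complex_of_real (U + c * (U - s * Y))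
        + (if j = 0 then 1 else -1) * \<i> * complex_of_real (Y + c * (s * U - Y)))"
  using s j unfolding sum2 Bm_def
  by (auto simp: less2 complex_eq_iff algebra_simps)

lemma dd_eq:
  assumes a0: "\<alpha> 0 = 0"
  shows "j < 2 \<Longrightarrow> dd_state 2 Gm wv yv \<alpha> t n j = complex_of_real (exp (-(\<alpha> n * t))) / 2 *
     (complex_of_real (fst (UY \<alpha> t n)) + (if j = 0 then 1 else -1) * \<i> * complex_of_real (snd (UY \<alpha> t n)))"
proof (induction n arbitrary: j)
  case 0
  then show ?case by (simp add: a0 yv_def)
next
  case (Suc n)
  define c where "c = (\<alpha> (Suc n) - \<alpha> n) * t"
  define s where "s = (-1::real) ^ (Suc n + 1)"
  define A where "A = (\<lambda>i j. complex_of_real ((\<alpha> (Suc n) - \<alpha> n) * t) * seg_gen Gm wv (Suc n) i j)"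
  have sc: "(-1::complex) ^ (Suc n + 1) = complex_of_real s" unfolding s_def by simp
  have s: "s = 1 \<or> s = -1" unfolding s_def by (rule sign_cases)
  have ss: "complex_of_real s * complex_of_real s = 1" using s by auto
  have A: "\<forall>i<2. \<forall>j<2. A i j = complex_of_real c * (Bm (complex_of_real s) i j - (if i = j then 1 else 0))"
    unfolding A_def c_def using seg_eq sc by auto
  have "dd_state 2 Gm wv yv \<alpha> t (Suc n) j = (\<Sum>l<2. mexp 2 A j l * dd_state 2 Gm wv yv \<alpha> t n l)"
    by (simp add: mvec_def A_def)
  also have "\<dots> = (\<Sum>l<2. (complex_of_real (exp (-c)) * ((if j = l then 1 else 0) + complex_of_real c * Bm (complex_of_real s) j l))
           * (complex_of_real (exp (-(\<alpha> n * t))) / 2 * (complex_of_real (fst (UY \<alpha> t n)) + (if l = 0 then 1 else -1) * \<i> * complex_of_real (snd (UY \<alpha> t n)))))"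
    using Suc mexp_eq[OF ss A] by (intro sum.cong) (auto simp: exp_of_real[symmetric])
  also have "\<dots> = complex_of_real (exp (-c) * exp (-(\<alpha> n * t))) / 2 * (complex_of_real (fst (UY \<alpha> t (Suc n)))
        + (if j = 0 then 1 else -1) * \<i> * complex_of_real (snd (UY \<alpha> t (Suc n))))"
    using alg[OF s Suc.prems, where e="exp (-c)" and E="exp(-(\<alpha> n*t))" and U="fst (UY \<alpha> t n)" and Y="snd (UY \<alpha> t n)" and c=c]
    by (simp only: UY.simps Let_def c_def[symmetric] s_def[symmetric] fst_conv snd_conv)
  also have "exp (-c) * exp (-(\<alpha> n * t)) = exp (-(\<alpha> (Suc n) * t))"
    by (simp add: c_def mult_exp_exp algebra_simps)
  finally show ?case .
qed

lemma coh_eq: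
  assumes a0: "\<alpha> 0 = 0" and a1: "\<alpha> (N + 1) = 1"
  shows "coherence 2 Gm wv yv N \<alpha> t = complex_of_real (1 - (1 - exp (-t) * fst (UY \<alpha> t (N + 1))))"
proof -
  define d0 where "d0 = dd_state 2 Gm wv yv \<alpha> t (N+1) 0"
  define d1 where "d1 = dd_state 2 Gm wv yv \<alpha> t (N+1) 1"
  define U where "U = fst (UY \<alpha> t (N+1))"
  define Y where "Y = snd (UY \<alpha> t (N+1))"
  have h0: "d0 = complex_of_real (exp (-(\<alpha> (N+1) * t))) / 2 * (complex_of_real U + (if (0::nat) = 0 then 1 else -1) * \<i> * complex_of_real Y)"
    unfolding d0_def U_def Y_def by (rule dd_eq[of \<alpha>, OF a0]) simp
  have h1: "d1 = complex_of_real (exp (-(\<alpha> (N+1) * t))) / 2 * (complex_of_real U + (if (1::nat) = 0 then 1 else -1) * \<i> * complex_of_real Y)"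
    unfolding d1_def U_def Y_def by (rule dd_eq[of \<alpha>, OF a0]) simp
  have "coherence 2 Gm wv yv N \<alpha> t = d0 + d1"
    unfolding coherence_def sum2 d0_def d1_def ..
  also have "\<dots> = complex_of_real (1 - (1 - exp (-t) * U))"
    unfolding h0 h1 using a1 by (simp add: complex_eq_iff)
  finally show ?thesis unfolding U_def .
qed



fun Ff :: "(nat \<Rightarrow> real) \<Rightarrow> nat \<Rightarrow> real" where
  "Ff \<alpha> 0 = 0"
| "Ff \<alpha> (Suc n) = Ff \<alpha> n + (-1) ^ (Suc n + 1) * (\<alpha> (Suc n) - \<alpha> n)"

fun Ifn :: "(nat \<Rightarrow> real) \<Rightarrow> nat \<Rightarrow> real" where
  "Ifn \<alpha> 0 = 0"
| "Ifn \<alpha> (Suc n) = Ifn \<alpha> n + (\<alpha> (Suc n) - \<alpha> n) * Ff \<alpha> n + (-1) ^ (Suc n + 1) * (\<alpha> (Suc n) - \<alpha> n)^2 / 2"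

fun Qf :: "(nat \<Rightarrow> real) \<Rightarrow> nat \<Rightarrow> real" where
  "Qf \<alpha> 0 = 0"
| "Qf \<alpha> (Suc n) = Qf \<alpha> n + (\<alpha> (Suc n) - \<alpha> n) * (Ff \<alpha> n)^2
     + (-1) ^ (Suc n + 1) * (\<alpha> (Suc n) - \<alpha> n)^2 * Ff \<alpha> n + (\<alpha> (Suc n) - \<alpha> n)^3 / 3"

definition PUx :: "real \<Rightarrow> real \<Rightarrow> real \<Rightarrow> real \<Rightarrow> real \<Rightarrow> real" where
  "PUx al F I Q t = 1 + al * t + (al^2 - F^2) / 2 * t^2 + (al^3/6 - al * F^2 / 2 + 2 * F * I - 2 * Q) * t^3"

definition PYx :: "real \<Rightarrow> real \<Rightarrow> real \<Rightarrow> real \<Rightarrow> real" where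
  "PYx al F I t = F * t + (al * F - 2 * I) * t^2"

lemma bracketU:
  assumes "s = 1 \<or> s = (-1::real)"
  shows "PUx al F I Q t + a * t * (PUx al F I Q t - s * PYx al F I t)
     - PUx (al + a) (F + s * a) (I + a * F + s * a^2 / 2) (Q + a * F^2 + s * a^2 * F + a^3 / 3) t
     = a * (al^3/6 - al * F^2 / 2 + 2 * F * I - 2 * Q) * t^4"
  using assms unfolding PUx_def PYx_def
  by (auto simp: field_simps eval_nat_numeral)

lemma bracketY:
  assumes "s = 1 \<or> s = (-1::real)"
  shows "PYx al F I t + a * t * (s * PUx al F I Q t - PYx al F I t)
     - PYx (al + a) (F + s * a) (I + a * F + s * a^2 / 2) t
     = a * (s * (al^2 - F^2) / 2 - (al * F - 2 * I)) * t^3 + s * a * (al^3/6 - al * F^2 / 2 + 2 * F * I - 2 * Q) * t^4"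
  using assms unfolding PUx_def PYx_def
  by (auto simp: field_simps eval_nat_numeral)

definition PU where "PU \<alpha> n t = PUx (\<alpha> n) (Ff \<alpha> n) (Ifn \<alpha> n) (Qf \<alpha> n) t"
definition PY where "PY \<alpha> n t = PYx (\<alpha> n) (Ff \<alpha> n) (Ifn \<alpha> n) t"

lemma bnd_zero: "bnd k (\<lambda>t. 0)"
  unfolding bnd_def by (rule exI[of _ 0]) simp

lemma bnd_tmul': "bnd k f \<Longrightarrow> Suc k = m \<Longrightarrow> bnd m (\<lambda>t. t * f t)"
  using bnd_tmul by blast

lemma expand:
  assumes a0: "\<alpha> 0 = 0"
  shows "bnd 4 (\<lambda>t. fst (UY \<alpha> t n) - PU \<alpha> n t) \<and> bnd 3 (\<lambda>t. snd (UY \<alpha> t n) - PY \<alpha> n t)"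
proof (induction n)
  case 0
  have "(\<lambda>t. fst (UY \<alpha> t 0) - PU \<alpha> 0 t) = (\<lambda>t. 0)" "(\<lambda>t. snd (UY \<alpha> t 0) - PY \<alpha> 0 t) = (\<lambda>t. 0)"
    by (auto simp: PU_def PY_def PUx_def PYx_def a0)
  then show ?case using bnd_zero by simp
next
  case (Suc n)
  define a where "a = \<alpha> (Suc n) - \<alpha> n"
  define s where "s = (-1::real) ^ (Suc n + 1)"
  define u3 where "u3 = (\<alpha> n^3/6 - \<alpha> n * Ff \<alpha> n^2 / 2 + 2 * Ff \<alpha> n * Ifn \<alpha> n - 2 * Qf \<alpha> n)"
  define v3 where "v3 = (s * (\<alpha> n^2 - Ff \<alpha> n^2) / 2 - (\<alpha> n * Ff \<alpha> n - 2 * Ifn \<alpha> n))"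
  have s: "s = 1 \<or> s = -1" unfolding s_def by (rule sign_cases)
  have PUS: "PU \<alpha> (Suc n) t = PUx (\<alpha> n + a) (Ff \<alpha> n + s * a) (Ifn \<alpha> n + a * Ff \<alpha> n + s * a^2 / 2)
        (Qf \<alpha> n + a * Ff \<alpha> n^2 + s * a^2 * Ff \<alpha> n + a^3 / 3) t" for t
    unfolding PU_def a_def s_def by simp
  have PYS: "PY \<alpha> (Suc n) t = PYx (\<alpha> n + a) (Ff \<alpha> n + s * a) (Ifn \<alpha> n + a * Ff \<alpha> n + s * a^2 / 2) t" for t
    unfolding PY_def a_def s_def by simp
  have UYS: "UY \<alpha> t (Suc n) = (fst (UY \<alpha> t n) + a * t * (fst (UY \<alpha> t n) - s * snd (UY \<alpha> t n)),
      snd (UY \<alpha> t n) + a * t * (s * fst (UY \<alpha> t n) - snd (UY \<alpha> t n)))" for t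
    unfolding a_def s_def by (simp add: Let_def)
  have eqU: "(\<lambda>t. fst (UY \<alpha> t (Suc n)) - PU \<alpha> (Suc n) t) = (\<lambda>t.
      ((fst (UY \<alpha> t n) - PU \<alpha> n t) + a * (t * (fst (UY \<alpha> t n) - PU \<alpha> n t)))
      + (- (s * a) * (t * (snd (UY \<alpha> t n) - PY \<alpha> n t)) + (a * u3) * t^4))"
  proof
    fix t
    have "PU \<alpha> n t + a * t * (PU \<alpha> n t - s * PY \<alpha> n t) - PU \<alpha> (Suc n) t = a * u3 * t^4"
      unfolding PUS u3_def using bracketU[OF s] by (simp add: PU_def PY_def)
    then show "fst (UY \<alpha> t (Suc n)) - PU \<alpha> (Suc n) t = ((fst (UY \<alpha> t n) - PU \<alpha> n t) + a * (t * (fst (UY \<alpha> t n) - PU \<alpha> n t)))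
      + (- (s * a) * (t * (snd (UY \<alpha> t n) - PY \<alpha> n t)) + (a * u3) * t^4)"
      unfolding UYS fst_conv by (simp add: algebra_simps)
  qed
  have eqY: "(\<lambda>t. snd (UY \<alpha> t (Suc n)) - PY \<alpha> (Suc n) t) = (\<lambda>t.
      ((snd (UY \<alpha> t n) - PY \<alpha> n t) + (s * a) * (t * (fst (UY \<alpha> t n) - PU \<alpha> n t)))
      + ((- a) * (t * (snd (UY \<alpha> t n) - PY \<alpha> n t)) + ((a * v3) * t^3 + (s * a * u3) * t^4)))"
  proof
    fix t
    have "PY \<alpha> n t + a * t * (s * PU \<alpha> n t - PY \<alpha> n t) - PY \<alpha> (Suc n) t = a * v3 * t^3 + s * a * u3 * t^4"
      unfolding PYS u3_def v3_def using bracketY[OF s] by (simp add: PU_def PY_def)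
    then show "snd (UY \<alpha> t (Suc n)) - PY \<alpha> (Suc n) t = ((snd (UY \<alpha> t n) - PY \<alpha> n t) + (s * a) * (t * (fst (UY \<alpha> t n) - PU \<alpha> n t)))
      + ((- a) * (t * (snd (UY \<alpha> t n) - PY \<alpha> n t)) + ((a * v3) * t^3 + (s * a * u3) * t^4))"
      unfolding UYS snd_conv by (simp add: algebra_simps)
  qed
  from Suc.IH have IU: "bnd 4 (\<lambda>t. fst (UY \<alpha> t n) - PU \<alpha> n t)" and IY: "bnd 3 (\<lambda>t. snd (UY \<alpha> t n) - PY \<alpha> n t)"
    by auto
  have "bnd 4 (\<lambda>t. fst (UY \<alpha> t (Suc n)) - PU \<alpha> (Suc n) t)"
    unfolding eqU
    by (intro bnd_add IU bnd_cmul bnd_pow bnd_mono[OF _ bnd_tmul'[OF IU refl]] bnd_tmul'[OF IY]) auto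
  moreover have "bnd 3 (\<lambda>t. snd (UY \<alpha> t (Suc n)) - PY \<alpha> (Suc n) t)"
    unfolding eqY
    by (intro bnd_add IY bnd_cmul bnd_pow bnd_mono[OF _ bnd_tmul'[OF IU refl]] bnd_mono[OF _ bnd_tmul'[OF IY refl]]) auto
  ultimately show ?case ..
qed

lemma Ff_sum: "Ff \<alpha> m = (\<Sum>n=1..m. (-1) ^ (n + 1) * (\<alpha> n - \<alpha> (n - 1)))"
  by (induction m) (auto simp: sum.cl_ivl_Suc)

lemma incr_pos:
  assumes "a > 0" "s = 1 \<or> s = (-1::real)"
  shows "a * F^2 + s * a^2 * F + a^3 / 3 > 0"
proof -
  have "a * F^2 + s * a^2 * F + a^3 / 3 = a * ((F + s * a / 2)^2 + a^2 / 12)"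
    using assms(2) by (auto simp: field_simps power2_eq_square power3_eq_cube)
  also have "\<dots> > 0" using assms(1) by (intro mult_pos_pos add_nonneg_pos) auto
  finally show ?thesis .
qed

lemma Qf_nonneg: "\<forall>n\<le>N. \<alpha> n < \<alpha> (Suc n) \<Longrightarrow> m \<le> N + 1 \<Longrightarrow> Qf \<alpha> m \<ge> 0"
proof (induction m)
  case 0 then show ?case by simp
next
  case (Suc m)
  then have "Qf \<alpha> m \<ge> 0" by simp
  moreover have "(\<alpha> (Suc m) - \<alpha> m) * (Ff \<alpha> m)^2 + (-1) ^ (Suc m + 1) * (\<alpha> (Suc m) - \<alpha> m)^2 * Ff \<alpha> m + (\<alpha> (Suc m) - \<alpha> m)^3 / 3 > 0"
    using Suc.prems by (intro incr_pos sign_cases) auto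
  ultimately show ?case by simp
qed

lemma Qf_pos: "\<forall>n\<le>N. \<alpha> n < \<alpha> (Suc n) \<Longrightarrow> Qf \<alpha> (N + 1) > 0"
proof -
  assume h: "\<forall>n\<le>N. \<alpha> n < \<alpha> (Suc n)"
  have "Qf \<alpha> N \<ge> 0" using Qf_nonneg[OF h] by simp
  moreover have "(\<alpha> (Suc N) - \<alpha> N) * (Ff \<alpha> N)^2 + (-1) ^ (Suc N + 1) * (\<alpha> (Suc N) - \<alpha> N)^2 * Ff \<alpha> N + (\<alpha> (Suc N) - \<alpha> N)^3 / 3 > 0"
    using h by (intro incr_pos sign_cases) auto
  ultimately show ?thesis by simp
qed

lemma complex_bigo_real:
  assumes "(\<lambda>t. complex_of_real (f t)) \<in> O[F](\<lambda>t. complex_of_real (h t))"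
  shows "f \<in> O[F](h)"
proof -
  from assms obtain c where c: "c > 0" "eventually (\<lambda>t. norm (complex_of_real (f t)) \<le> c * norm (complex_of_real (h t))) F"
    by (elim landau_o.bigE) auto
  from c(2) have "eventually (\<lambda>t. norm (f t) \<le> c * norm (h t)) F" by simp
  then show ?thesis using c(1) by (intro landau_o.bigI) auto
qed

theorem corollary1:
  fixes N :: nat and \<alpha> :: "nat \<Rightarrow> real"
  assumes "N \<ge> 1"
    and "\<alpha> 0 = 0" and "\<alpha> (N + 1) = 1"
    and "\<forall>n\<le>N. \<alpha> n < \<alpha> (Suc n)"
    and "(\<Sum>n=1..N+1. (-1) ^ (n + 1) * (\<alpha> n - \<alpha> (n - 1))) = 0"
  shows "\<exists>M \<Gamma> w y0. telegraph_noise M \<Gamma> w y0 \<and>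
           (\<lambda>t. 1 - coherence M \<Gamma> w y0 N \<alpha> t) \<notin> O[at_right 0](\<lambda>t. complex_of_real (t ^ 4))"
proof (intro exI conjI)
  show "telegraph_noise 2 Gm wv yv" by (rule noise)
  define U where "U t = fst (UY \<alpha> t (N + 1))" for t
  define g where "g t = 1 - exp (-t) * U t" for t
  define \<kappa> where "\<kappa> = 2 * Qf \<alpha> (N + 1)"
  define p where "p = 1/6 - \<kappa>"
  define P where "P t = 1 + t + t^2/2 + p * t^3" for t
  have kpos: "\<kappa> > 0" unfolding \<kappa>_def using Qf_pos[OF assms(4)] by simp
  have F0: "Ff \<alpha> (N + 1) = 0" using assms(5) Ff_sum by simp
  have PUeq: "PU \<alpha> (N + 1) t = P t" for t
    unfolding PU_def PUx_def P_def p_def \<kappa>_def using F0 assms(3) by simp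
  have rU: "bnd 4 (\<lambda>t. U t - P t)"
    using expand[of \<alpha> "N+1", OF assms(2)] unfolding U_def PUeq by simp
  have P0: "bnd 0 P"
  proof -
    have "bnd 0 (\<lambda>t. ((1 * t^0 + 1 * t^1) + (1/2) * t^2) + p * t^3)"
      by (intro bnd_add bnd_pow) auto
    moreover have "(\<lambda>t. ((1 * t^0 + 1 * t^1) + (1/2) * t^2) + p * t^3) = P"
      unfolding P_def by auto
    ultimately show ?thesis by simp
  qed
  have poly: "1 - (1 - t + t^2/2 - t^3/6) * P t - \<kappa> * t^3
      = (p - 1/12) * t^4 + (1/12 - p/2) * t^5 + (p/6) * t^6" for t
    unfolding P_def p_def by (simp add: field_simps eval_nat_numeral)
  have geq: "(\<lambda>t. g t - \<kappa> * t^3) = (\<lambda>t. (((p - 1/12) * t^4 + (1/12 - p/2) * t^5) + (p/6) * t^6)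
      - ((exp(-t) - (1 - t + t^2/2 - t^3/6)) * P t + (U t - P t) * exp (-t)))"
  proof
    fix t
    show "g t - \<kappa> * t^3 = (((p - 1/12) * t^4 + (1/12 - p/2) * t^5) + (p/6) * t^6)
      - ((exp(-t) - (1 - t + t^2/2 - t^3/6)) * P t + (U t - P t) * exp (-t))"
      unfolding g_def using poly[of t] by (simp add: algebra_simps)
  qed
  have gk: "bnd 4 (\<lambda>t. g t - \<kappa> * t^3)"
    unfolding geq
    by (intro bnd_diff bnd_add bnd_pow bnd_mult0 exp_bnd P0 rU exp_bnd0) auto
  show "(\<lambda>t. 1 - coherence 2 Gm wv yv N \<alpha> t) \<notin> O[at_right 0](\<lambda>t. complex_of_real (t ^ 4))"
  proof
    assume H: "(\<lambda>t. 1 - coherence 2 Gm wv yv N \<alpha> t) \<in> O[at_right 0](\<lambda>t. complex_of_real (t ^ 4))"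
    have "(\<lambda>t. 1 - coherence 2 Gm wv yv N \<alpha> t) = (\<lambda>t. complex_of_real (g t))"
      by (rule ext) (simp add: coh_eq[OF assms(2,3)] g_def U_def)
    with H have "g \<in> O[at_right 0](\<lambda>t. t ^ 4)" using complex_bigo_real[of g] by simp
    then have "bnd 4 g" by (rule bigo_bnd)
    from bnd_diff[OF this gk] have "bnd 4 (\<lambda>t. \<kappa> * t^3)" by simp
    then have "\<kappa> = 0" by (rule bnd_not3)
    with kpos show False by simp
  qed
qed


end
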